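(* Let $X$ be a finite connected simplicial complex and $\delta$ a cellular perversity. The family $\mathcal B(X,\delta)=\{U(\Delta,\delta)\}_{\Delta}$, indexed by all simplices $\Delta$ of $X$, is a base for a topology on $X$.
   Context: Simplices are open and $X$ is their disjoint union; $\Delta\leftrightarrow\Delta'$ means one is a face of the other. Cellular perversity: $\delta:\mathbb Z_{\ge0}\to\mathbb Z$, $\delta(0)=0$, bijective from each $\{0,\dots,k\}$ onto an interval $\{a,\dots,a+k\}$, $a\le0$; $\delta(\Delta)=\delta(\dim\Delta)$. Order $\Lambda(X,\delta)$: $\Delta\ge\Delta'$ iff there is a chain $\Delta=\Delta_0,\dots,\Delta_r=\Delta'$ ($r\ge0$) with $\Delta_i\leftrightarrow\Delta_{i+1}$ and $\delta(\Delta_i)=\delta(\Delta_{i+1})+1$. The perverse star is $U(\Delta,\delta)=\bigsqcup_{\Delta'\le\Delta}\Delta'$. *)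

theory Defs
  imports "HOL-Analysis.Analysis"
begin

definition finite_abs_complex :: "'v set set \<Rightarrow> bool" where
  "finite_abs_complex K \<longleftrightarrow> finite K \<and> (\<forall>s\<in>K. finite s \<and> s \<noteq> {}) \<and>
     (\<forall>s\<in>K. \<forall>t. t \<subseteq> s \<and> t \<noteq> {} \<longrightarrow> t \<in> K)"

text \<open>Geometric realization via barycentric coordinates: points are functions
  'v \<Rightarrow> real, nonnegative, summing to 1, whose support is a simplex.\<close>
definition realization :: "'v set set \<Rightarrow> ('v \<Rightarrow> real) set" where
  "realization K = {p. (\<forall>v. p v \<ge> 0) \<and> {v. p v \<noteq> 0} \<in> K \<and> sum p {v. p v \<noteq> 0} = 1}"

definition open_simplex :: "'v set set \<Rightarrow> 'v set \<Rightarrow> ('v \<Rightarrow> real) set" where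
  "open_simplex K s = {p \<in> realization K. {v. p v \<noteq> 0} = s}"

definition sdim :: "'v set \<Rightarrow> nat" where
  "sdim s = card s - 1"

definition cellular_perversity :: "(nat \<Rightarrow> int) \<Rightarrow> bool" where
  "cellular_perversity \<delta> \<longleftrightarrow> \<delta> 0 = 0 \<and>
     (\<forall>k::nat. \<exists>a::int. a \<le> 0 \<and> bij_betw \<delta> {0..k} {a..a + int k})"

definition face_rel :: "'v set \<Rightarrow> 'v set \<Rightarrow> bool" where
  "face_rel s t \<longleftrightarrow> s \<subseteq> t \<or> t \<subseteq> s"

definition perv_step :: "'v set set \<Rightarrow> (nat \<Rightarrow> int) \<Rightarrow> 'v set \<Rightarrow> 'v set \<Rightarrow> bool" where
  "perv_step K \<delta> s t \<longleftrightarrow> s \<in> K \<and> t \<in> K \<and> face_rel s t \<and> \<delta> (sdim s) = \<delta> (sdim t) + 1"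

text \<open>perv_le K \<delta> t s means s \<ge> t in \<Lambda>(X,\<delta>).\<close>
definition perv_le :: "'v set set \<Rightarrow> (nat \<Rightarrow> int) \<Rightarrow> 'v set \<Rightarrow> 'v set \<Rightarrow> bool" where
  "perv_le K \<delta> t s \<longleftrightarrow> s \<in> K \<and> t \<in> K \<and> (perv_step K \<delta>)\<^sup>*\<^sup>* s t"

definition perverse_star :: "'v set set \<Rightarrow> (nat \<Rightarrow> int) \<Rightarrow> 'v set \<Rightarrow> ('v \<Rightarrow> real) set" where
  "perverse_star K \<delta> s = \<Union>{open_simplex K t | t. perv_le K \<delta> t s}"

text \<open>Connectedness of the complex: any two simplices are joined by a chain of
  face relations (equivalent to connectedness of the realization).\<close>
definition connected_complex :: "'v set set \<Rightarrow> bool" where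
  "connected_complex K \<longleftrightarrow>
     (\<forall>s\<in>K. \<forall>t\<in>K. (\<lambda>a b. a \<in> K \<and> b \<in> K \<and> face_rel a b)\<^sup>*\<^sup>* s t)"

definition is_base_for_topology_on :: "'a set \<Rightarrow> 'a set set \<Rightarrow> bool" where
  "is_base_for_topology_on X B \<longleftrightarrow>
     (\<exists>T :: 'a topology. topspace T = X \<and> (\<forall>U. openin T U \<longleftrightarrow> (\<exists>F. F \<subseteq> B \<and> U = \<Union>F)))"

end

theory Submission
  imports Defs
begin

lemma pstar_mem:
  "p \<in> perverse_star K \<delta> s \<longleftrightarrow> p \<in> realization K \<and> perv_le K \<delta> {v. p v \<noteq> 0} s"
  unfolding perverse_star_def open_simplex_def by auto

lemma perv_le_trans: "perv_le K \<delta> t s \<Longrightarrow> perv_le K \<delta> s r \<Longrightarrow> perv_le K \<delta> t r"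
  unfolding perv_le_def by (meson rtranclp_trans)

lemma supp_in: "p \<in> realization K \<Longrightarrow> {v. p v \<noteq> 0} \<in> K"
  unfolding realization_def by auto

lemma self_in: "p \<in> realization K \<Longrightarrow> p \<in> perverse_star K \<delta> {v. p v \<noteq> 0}"
  unfolding pstar_mem perv_le_def using supp_in by auto

lemma mono_star: "perv_le K \<delta> t s \<Longrightarrow> perverse_star K \<delta> t \<subseteq> perverse_star K \<delta> s"
  using pstar_mem perv_le_trans by blast

lemma star_sub: "perverse_star K \<delta> s \<subseteq> realization K"
  using pstar_mem by blast

lemma char:
  fixes B :: "'a set set"
  shows "(\<exists>F. F \<subseteq> B \<and> U = \<Union>F) \<longleftrightarrow> (\<forall>p\<in>U. \<exists>b\<in>B. p \<in> b \<and> b \<subseteq> U)"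
proof
  assume "\<exists>F. F \<subseteq> B \<and> U = \<Union>F"
  then obtain F where "F \<subseteq> B" "U = \<Union>F" by blast
  then show "\<forall>p\<in>U. \<exists>b\<in>B. p \<in> b \<and> b \<subseteq> U" by blast
next
  assume h: "\<forall>p\<in>U. \<exists>b\<in>B. p \<in> b \<and> b \<subseteq> U"
  have "U = \<Union>{b\<in>B. b \<subseteq> U}"
  proof
    show "U \<subseteq> \<Union>{b\<in>B. b \<subseteq> U}" using h by blast
  qed blast
  then show "\<exists>F. F \<subseteq> B \<and> U = \<Union>F" by (intro exI[of _ "{b\<in>B. b \<subseteq> U}"]) blast
qed

theorem lemma2p3p3:
  fixes K :: "'v set set" and \<delta> :: "nat \<Rightarrow> int"
  assumes "finite_abs_complex K"
    and "connected_complex K"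
    and "cellular_perversity \<delta>"
  shows "is_base_for_topology_on (realization K) (perverse_star K \<delta> ` K)"
proof -
  define B where "B = perverse_star K \<delta> ` K"
  define L where "L = (\<lambda>U. \<exists>F. F \<subseteq> B \<and> U = \<Union>F)"
  have L2: "L U \<longleftrightarrow> (\<forall>p\<in>U. \<exists>b\<in>B. p \<in> b \<and> b \<subseteq> U)" for U
    unfolding L_def char by (rule refl)
  have int: "L (S \<inter> T)" if LS: "L S" and LT: "L T" for S T
    unfolding L2
  proof
    fix p assume p: "p \<in> S \<inter> T"
    then obtain b1 b2 where b: "b1 \<in> B" "b2 \<in> B" "p \<in> b1" "p \<in> b2" "b1 \<subseteq> S" "b2 \<subseteq> T"
      using LS LT unfolding L2 by blast
    then obtain s1 s2 where s: "b1 = perverse_star K \<delta> s1" "b2 = perverse_star K \<delta> s2"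
      unfolding B_def by blast
    have pr: "p \<in> realization K" and l1: "perv_le K \<delta> {v. p v \<noteq> 0} s1"
      and l2: "perv_le K \<delta> {v. p v \<noteq> 0} s2"
      using b s pstar_mem by blast+
    have "perverse_star K \<delta> {v. p v \<noteq> 0} \<in> B"
      unfolding B_def using supp_in[OF pr] by blast
    moreover have "p \<in> perverse_star K \<delta> {v. p v \<noteq> 0}" using self_in[OF pr] .
    moreover have "perverse_star K \<delta> {v. p v \<noteq> 0} \<subseteq> S \<inter> T"
      using mono_star[OF l1] mono_star[OF l2] b s by blast
    ultimately show "\<exists>b\<in>B. p \<in> b \<and> b \<subseteq> S \<inter> T" by blast
  qed
  have un: "L (\<Union>\<K>)" if H: "\<forall>k\<in>\<K>. L k" for \<K>
    unfolding L2
  proof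
    fix p assume "p \<in> \<Union>\<K>"
    then obtain k where k: "k \<in> \<K>" "p \<in> k" by blast
    then have "L k" using H by blast
    then obtain b where "b \<in> B" "p \<in> b" "b \<subseteq> k" using k(2) unfolding L2 by blast
    then show "\<exists>b\<in>B. p \<in> b \<and> b \<subseteq> \<Union>\<K>" using k(1) by blast
  qed
  have ist: "istopology L" unfolding istopology_def using int un by blast
  define T where "T = topology L"
  have op: "openin T = L" unfolding T_def using ist by simp
  have XL: "L (realization K)"
    unfolding L2
  proof
    fix p assume pr: "p \<in> realization K"
    have "perverse_star K \<delta> {v. p v \<noteq> 0} \<in> B"
      unfolding B_def using supp_in[OF pr] by (rule imageI)
    then show "\<exists>b\<in>B. p \<in> b \<and> b \<subseteq> realization K"
      using self_in[OF pr] star_sub[of K \<delta> "{v. p v \<noteq> 0}"] by (intro bexI[of _ "perverse_star K \<delta> {v. p v \<noteq> 0}"] conjI)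
  qed
  have BX: "\<forall>b\<in>B. b \<subseteq> realization K"
  proof
    fix b assume "b \<in> B"
    then obtain s where "b = perverse_star K \<delta> s" unfolding B_def by (rule imageE)
    then show "b \<subseteq> realization K" using star_sub by simp
  qed
  have sub: "U \<subseteq> realization K" if LU: "L U" for U
  proof
    fix p assume "p \<in> U"
    then obtain b where "b \<in> B" "p \<in> b" using LU unfolding L2 by blast
    then show "p \<in> realization K" using BX by blast
  qed
  have "topspace T = realization K"
    unfolding topspace_def op using XL sub by blast
  then show ?thesis
    unfolding is_base_for_topology_on_def
    using op unfolding L_def B_def by metis
qed

end
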